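(* Let $k\ge 3$ and let $c_1\ge c_2\ge\dots\ge c_k>0$ be constants with $\sum_{i=1}^k c_i=1$. For every $n$ such that all $c_i n$ are integers, let $G_n$ be the complete $k$-partite graph with parts $V_1,\dots,V_k$, $|V_i|=c_i n$. Then: (i) if $c_1\le \tfrac12$, $\mathrm{rc}(G_n)=n$; (ii) if $c_1>\tfrac12$, $\mathrm{rc}(G_n)=2c_1n-1$.
   Context: Robot crawler model: let $G=(V,E)$ be a finite connected simple graph with $|V|=n$. An initial weighting is a bijection $w_0:V\to\{-n,-n+1,\dots,-1\}$. At time $1$ the crawler visits $w_0^{-1}(-n)$. If the crawler visits vertex $v$ at time $t$, then $w_t(v)=t$ and $w_t(u)=w_{t-1}(u)$ for all $u\neq v$. If $\min_{y\in V}w_t(y)>0$, the process stops and $\mathcal{RC}(G,w_0):=t$. Otherwise, at time $t+1$ the crawler moves to the neighbour $u$ of $v$ minimising $w_t(u)$ (the weights are distinct, so this is well defined). A vertex is "cleaned" at the first time it is visited. With $\Omega_n$ the set of all $n!$ initial weightings, $\mathrm{rc}(G)=\min_{w_0\in\Omega_n}\mathcal{RC}(G,w_0)$, $\mathrm{RC}(G)=\max_{w_0\in\Omega_n}\mathcal{RC}(G,w_0)$, and $\overline{\mathrm{rc}}(G)=\mathbb{E}\,\mathcal{RC}(G,\overline{w_0})$ where $\overline{w_0}$ is uniformly distributed on $\Omega_n$. A complete $k$-partite graph with parts $V_1,\dots,V_k$ has an edge between $u$ and $v$ if and only if $u,v$ lie in different parts. *)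

theory Defs
  imports Complex_Main
begin

text \<open>A graph is given by a finite vertex set V and a symmetric irreflexive
adjacency relation E (only its restriction to V matters).\<close>

definition weightings :: "'a set \<Rightarrow> ('a \<Rightarrow> int) set" where
  "weightings V = {w. bij_betw w V {- int (card V) .. -1} \<and> (\<forall>x. x \<notin> V \<longrightarrow> w x = 0)}"

fun crawl :: "'a set \<Rightarrow> ('a \<Rightarrow> 'a \<Rightarrow> bool) \<Rightarrow> ('a \<Rightarrow> int) \<Rightarrow> nat \<Rightarrow> 'a \<times> ('a \<Rightarrow> int)" where
  "crawl V E w0 0 = (undefined, w0)"
| "crawl V E w0 (Suc t) =
     (let (v, w) = crawl V E w0 t;
          v' = (if t = 0 then (THE u. u \<in> V \<and> w0 u = - int (card V))
                else (THE u. u \<in> V \<and> E v u \<and> (\<forall>u'. u' \<in> V \<and> E v u' \<longrightarrow> w u \<le> w u')))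
      in (v', w(v' := int (Suc t))))"

definition RC_time :: "'a set \<Rightarrow> ('a \<Rightarrow> 'a \<Rightarrow> bool) \<Rightarrow> ('a \<Rightarrow> int) \<Rightarrow> nat" where
  "RC_time V E w0 = (LEAST t. t \<ge> 1 \<and> (\<forall>y\<in>V. snd (crawl V E w0 t) y > 0))"

definition rc :: "'a set \<Rightarrow> ('a \<Rightarrow> 'a \<Rightarrow> bool) \<Rightarrow> nat" where
  "rc V E = Min (RC_time V E ` weightings V)"

definition kpart_V :: "nat \<Rightarrow> (nat \<Rightarrow> nat) \<Rightarrow> (nat \<times> nat) set" where
  "kpart_V k s = {(i, j). 1 \<le> i \<and> i \<le> k \<and> j < s i}"

definition kpart_E :: "nat \<times> nat \<Rightarrow> nat \<times> nat \<Rightarrow> bool" where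
  "kpart_E u v = (fst u \<noteq> fst v)"

end

theory Submission
  imports Defs "HOL-Library.Product_Lexorder"
begin


lemma crawl_Suc_fst:
  "fst (crawl V E w0 (Suc t)) = (if t = 0 then (THE u. u \<in> V \<and> w0 u = - int (card V))
     else (THE u. u \<in> V \<and> E (fst (crawl V E w0 t)) u \<and>
        (\<forall>u'. u' \<in> V \<and> E (fst (crawl V E w0 t)) u' \<longrightarrow> snd (crawl V E w0 t) u \<le> snd (crawl V E w0 t) u')))"
  by (cases "crawl V E w0 t") (simp add: Let_def)

lemma crawl_Suc_snd:
  "snd (crawl V E w0 (Suc t)) = (snd (crawl V E w0 t))(fst (crawl V E w0 (Suc t)) := int (Suc t))"
  by (cases "crawl V E w0 t") (simp add: Let_def)

lemma crawl_0_snd: "snd (crawl V E w0 0) = w0" by simp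

declare crawl.simps(2)[simp del]

context
  fixes V :: "'a set" and E :: "'a \<Rightarrow> 'a \<Rightarrow> bool" and w0 :: "'a \<Rightarrow> int"
  assumes fin: "finite V" and ne: "V \<noteq> {}" and w0: "w0 \<in> weightings V"
    and nb: "\<forall>v\<in>V. \<exists>u\<in>V. E v u"
begin

abbreviation "vv t \<equiv> fst (crawl V E w0 t)"
abbreviation "WW t \<equiv> snd (crawl V E w0 t)"

lemma w0_bij: "bij_betw w0 V {- int (card V) .. -1}" and w0_out: "\<And>x. x \<notin> V \<Longrightarrow> w0 x = 0"
  using w0 by (auto simp: weightings_def)

lemma w0_le: "w0 x \<le> 0"
proof (cases "x \<in> V")
  case True then have "w0 x \<in> {- int (card V) .. -1}" using w0_bij bij_betwE by blast
  then show ?thesis by simp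
qed (simp add: w0_out)

lemma first_vertex: "vv 1 \<in> V \<and> w0 (vv 1) = - int (card V)"
proof -
  have "card V > 0" using fin ne by (simp add: card_gt_0_iff)
  then have "- int (card V) \<in> w0 ` V" using w0_bij by (simp add: bij_betw_def)
  then obtain x where x: "x \<in> V" "w0 x = - int (card V)" by auto
  have inj: "inj_on w0 V" using w0_bij by (simp add: bij_betw_def)
  have "(THE u. u \<in> V \<and> w0 u = - int (card V)) = x"
    using x inj by (auto intro!: the_equality simp: inj_on_def)
  then show ?thesis using crawl_Suc_fst[of V E w0 0] x by (simp add: One_nat_def)
qed

lemma step_aux:
  assumes inj: "inj_on (WW t) V" and vt: "vv t \<in> V" and t: "t \<noteq> 0"
  shows "vv (Suc t) \<in> V \<and> E (vv t) (vv (Suc t)) \<and> (\<forall>u\<in>V. E (vv t) u \<longrightarrow> WW t (vv (Suc t)) \<le> WW t u)"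
proof -
    let ?N = "{u\<in>V. E (vv t) u}"
    have finN: "finite ?N" using fin by simp
    have neN: "?N \<noteq> {}" using nb vt by auto
    have "Min (WW t ` ?N) \<in> WW t ` ?N" using finN neN by (meson Min_in finite_imageI image_is_empty)
    then obtain x where x2: "Min (WW t ` ?N) = WW t x" and x1: "x \<in> ?N" by (rule imageE)
    note x = x1 x2[symmetric]
    have xmin: "\<forall>u\<in>?N. WW t x \<le> WW t u" using x finN by simp
    have "(THE u. u \<in> V \<and> E (vv t) u \<and> (\<forall>u'. u' \<in> V \<and> E (vv t) u' \<longrightarrow> WW t u \<le> WW t u')) = x"
    proof (rule the_equality)
      show "x \<in> V \<and> E (vv t) x \<and> (\<forall>u'. u' \<in> V \<and> E (vv t) u' \<longrightarrow> WW t x \<le> WW t u')"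
        using x xmin by auto
    next
      fix u assume u: "u \<in> V \<and> E (vv t) u \<and> (\<forall>u'. u' \<in> V \<and> E (vv t) u' \<longrightarrow> WW t u \<le> WW t u')"
      have a1: "WW t u \<le> WW t x" using u x by blast
      have a2: "WW t x \<le> WW t u" using u xmin by blast
      have "WW t u = WW t x" using a1 a2 by simp
      then show "u = x" using u x by (intro inj_onD[OF inj]) auto
    qed
    then have "vv (Suc t) = x" using crawl_Suc_fst[of V E w0 t] t by simp
    then show ?thesis using x xmin by simp
qed

lemma invar: "inj_on (WW t) V \<and> (\<forall>y\<in>V. WW t y \<le> int t) \<and> (t \<ge> 1 \<longrightarrow> vv t \<in> V)"
proof (induction t)
  case 0
  have "inj_on w0 V" using w0_bij by (simp add: bij_betw_def)
  then show ?case using w0_le by simp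
next
  case (Suc t)
  have inj: "inj_on (WW t) V" and le: "\<forall>y\<in>V. WW t y \<le> int t" using Suc by auto
  have vin: "vv (Suc t) \<in> V"
  proof (cases "t = 0")
    case True then show ?thesis using first_vertex by simp
  next
    case False
    have vt: "vv t \<in> V" using Suc False by simp
    show ?thesis using step_aux[OF inj vt False] by simp
  qed
  have "inj_on (WW (Suc t)) V"
    unfolding crawl_Suc_snd[of V E w0 t]
  proof (rule inj_on_fun_updI)
    show "inj_on (WW t) V" using inj .
    show "int (Suc t) \<notin> WW t ` V" using le by force
  qed
  moreover have "\<forall>y\<in>V. WW (Suc t) y \<le> int (Suc t)"
    unfolding crawl_Suc_snd[of V E w0 t] using le by auto
  ultimately show ?case using vin by simp
qed

lemma step_spec: "t \<ge> 1 \<Longrightarrow> vv (Suc t) \<in> V \<and> E (vv t) (vv (Suc t)) \<and> (\<forall>u\<in>V. E (vv t) u \<longrightarrow> WW t (vv (Suc t)) \<le> WW t u)"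
  using step_aux[of t] invar[of t] by simp

lemma visited: "WW t y > 0 \<Longrightarrow> \<exists>s\<in>{1..t}. vv s = y"
proof (induction t)
  case 0 then show ?case using w0_le[of y] by simp
next
  case (Suc t)
  show ?case
  proof (cases "vv (Suc t) = y")
    case True then show ?thesis by force
  next
    case False
    then have "WW t y > 0" using Suc.prems unfolding crawl_Suc_snd[of V E w0 t] by simp
    then obtain s where "s \<in> {1..t}" "vv s = y" using Suc.IH by blast
    then show ?thesis by (intro bexI[of _ s]) auto
  qed
qed

lemma pos_mono: "WW t y > 0 \<Longrightarrow> WW (Suc t) y > 0"
  unfolding crawl_Suc_snd[of V E w0 t] by simp

lemma pos_mono': assumes "WW t y > 0" "t \<le> t'" shows "WW t' y > 0"
  using assms(2)
proof (induction rule: dec_induct)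
  case base show ?case using assms(1) .
next
  case (step m) show ?case using pos_mono[OF step.IH] .
qed

definition "UU t = {y\<in>V. WW t y \<le> 0}"

lemma UU_sub: "UU (Suc t) \<subseteq> UU t"
proof
  fix y assume "y \<in> UU (Suc t)"
  then have y: "y \<in> V" "\<not> WW (Suc t) y > 0" by (auto simp: UU_def)
  then have "\<not> WW t y > 0" using pos_mono[of t y] by auto
  then show "y \<in> UU t" using y by (simp add: UU_def)
qed

lemma UU_fin: "finite (UU t)" unfolding UU_def using fin by simp

lemma UU_step1:
  assumes t: "t \<ge> 1" and y: "y \<in> UU t" and e: "E (vv t) y"
  shows "card (UU (Suc t)) < card (UU t)"
proof -
  have sp: "vv (Suc t) \<in> V \<and> E (vv t) (vv (Suc t)) \<and> (\<forall>u\<in>V. E (vv t) u \<longrightarrow> WW t (vv (Suc t)) \<le> WW t u)"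
    using step_spec t by simp
  have yV: "y \<in> V" and yle: "WW t y \<le> 0" using y by (auto simp: UU_def)
  have "WW t (vv (Suc t)) \<le> 0" using sp yV e yle by fastforce
  then have a: "vv (Suc t) \<in> UU t" using sp by (simp add: UU_def)
  have b: "vv (Suc t) \<notin> UU (Suc t)" unfolding UU_def crawl_Suc_snd[of V E w0 t] by simp
  have "UU (Suc t) \<subset> UU t" using UU_sub[of t] a b by auto
  then show ?thesis by (rule psubset_card_mono[OF UU_fin])
qed

lemma UU_step2:
  assumes Epart: "\<And>u v. E u v = (f u \<noteq> f v)" and t: "t \<ge> 1" and ne: "UU t \<noteq> {}"
  shows "card (UU (Suc (Suc t))) < card (UU t)"
proof (cases "\<exists>y\<in>UU t. E (vv t) y")
  case True
  then obtain y where "y \<in> UU t" "E (vv t) y" by blast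
  then have "card (UU (Suc t)) < card (UU t)" using UU_step1 t by blast
  moreover have "card (UU (Suc (Suc t))) \<le> card (UU (Suc t))" using UU_sub UU_fin by (intro card_mono) auto
  ultimately show ?thesis by simp
next
  case False
  then have same: "\<forall>y\<in>UU t. f y = f (vv t)" using Epart by auto
  have "E (vv t) (vv (Suc t))" using step_spec t by simp
  then have diff: "f (vv (Suc t)) \<noteq> f (vv t)" using Epart by simp
  show ?thesis
  proof (cases "UU (Suc t) = {}")
    case True
    then have "UU (Suc (Suc t)) = {}" using UU_sub[of "Suc t"] by auto
    then show ?thesis using ne UU_fin[of t] by (simp add: card_gt_0_iff)
  next
    case False
    then obtain y where y: "y \<in> UU (Suc t)" by auto
    then have "y \<in> UU t" using UU_sub by auto
    then have "E (vv (Suc t)) y" using same diff Epart by simp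
    then have "card (UU (Suc (Suc t))) < card (UU (Suc t))" using UU_step1[of "Suc t" y] y by simp
    moreover have "card (UU (Suc t)) \<le> card (UU t)" using UU_sub UU_fin by (intro card_mono) auto
    ultimately show ?thesis by simp
  qed
qed

lemma term_bound:
  assumes Epart: "\<And>u v. E u v = (f u \<noteq> f v)"
  shows "UU (1 + 2 * j) \<noteq> {} \<longrightarrow> card (UU (1 + 2 * j)) + j \<le> card V"
proof (induction j)
  case 0
  have "UU 1 \<subseteq> V" by (auto simp: UU_def)
  then show ?case using card_mono[OF fin] by simp
next
  case (Suc j)
  show ?case
  proof
    assume ne: "UU (1 + 2 * Suc j) \<noteq> {}"
    have eq: "1 + 2 * Suc j = Suc (Suc (1 + 2 * j))" by simp
    have "UU (1 + 2 * Suc j) \<subseteq> UU (1 + 2 * j)" unfolding eq using UU_sub by blast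
    then have ne': "UU (1 + 2 * j) \<noteq> {}" using ne by auto
    have "card (UU (1 + 2 * Suc j)) < card (UU (1 + 2 * j))"
      unfolding eq by (rule UU_step2[OF Epart _ ne']) simp
    then show "card (UU (1 + 2 * Suc j)) + Suc j \<le> card V" using Suc.IH ne' by simp
  qed
qed

lemma terminates:
  assumes Epart: "\<And>u v. E u v = (f u \<noteq> f v)"
  shows "\<exists>T\<ge>1. \<forall>y\<in>V. WW T y > 0"
proof -
  let ?T = "1 + 2 * Suc (card V)"
  have "UU ?T = {}" using term_bound[OF Epart, of "Suc (card V)"] by auto
  then have "\<forall>y\<in>V. WW ?T y > 0" by (auto simp: UU_def)
  then show ?thesis by (intro exI[of _ ?T]) simp
qed

lemma RC_props:
  assumes Epart: "\<And>u v. E u v = (f u \<noteq> f v)"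
  shows "RC_time V E w0 \<ge> 1 \<and> (\<forall>y\<in>V. WW (RC_time V E w0) y > 0)"
  unfolding RC_time_def by (rule LeastI_ex) (rule terminates[OF Epart])

lemma RC_le: "T \<ge> 1 \<Longrightarrow> \<forall>y\<in>V. WW T y > 0 \<Longrightarrow> RC_time V E w0 \<le> T"
  unfolding RC_time_def by (rule Least_le) simp

lemma RC_ge_card:
  assumes Epart: "\<And>u v. E u v = (f u \<noteq> f v)"
  shows "card V \<le> RC_time V E w0"
proof -
  let ?R = "RC_time V E w0"
  have "V \<subseteq> vv ` {1..?R}"
  proof
    fix y assume "y \<in> V"
    then have "WW ?R y > 0" using RC_props[OF Epart] by blast
    then obtain s where "s \<in> {1..?R}" "vv s = y" using visited by blast
    then show "y \<in> vv ` {1..?R}" by (intro image_eqI[of y vv s]) simp_all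
  qed
  then have "card V \<le> card (vv ` {1..?R})" by (intro card_mono) auto
  also have "\<dots> \<le> card {1..?R}" by (rule card_image_le) simp
  finally show ?thesis by simp
qed

lemma RC_ge_part:
  assumes Epart: "\<And>u v. E u v = (f u \<noteq> f v)"
  shows "2 * card {y\<in>V. f y = a} \<le> RC_time V E w0 + 1"
proof -
  let ?R = "RC_time V E w0"
  define A where "A = {s\<in>{1..?R}. f (vv s) = a}"
  have "{y\<in>V. f y = a} \<subseteq> vv ` A"
  proof
    fix y assume y: "y \<in> {y\<in>V. f y = a}"
    then have "WW ?R y > 0" using RC_props[OF Epart] by blast
    then obtain s where "s \<in> {1..?R}" "vv s = y" using visited by blast
    moreover then have "s \<in> A" using y unfolding A_def by simp
    ultimately show "y \<in> vv ` A" by (intro image_eqI[of y vv s]) simp_all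
  qed
  have finA: "finite A" unfolding A_def by simp
  have "card {y\<in>V. f y = a} \<le> card (vv ` A)" by (rule card_mono) (use finA \<open>{y\<in>V. f y = a} \<subseteq> vv ` A\<close> in simp_all)
  also have "\<dots> \<le> card A" by (rule card_image_le[OF finA])
  finally have c1: "card {y\<in>V. f y = a} \<le> card A" .
  have disj: "A \<inter> Suc ` A = {}"
  proof (rule ccontr)
    assume "A \<inter> Suc ` A \<noteq> {}"
    then obtain s where s: "s \<in> A" "Suc s \<in> A" by auto
    then have "s \<ge> 1" by (simp add: A_def)
    then have "E (vv s) (vv (Suc s))" using step_spec by simp
    then show False using s Epart by (simp add: A_def)
  qed
  have sub: "A \<union> Suc ` A \<subseteq> {1..?R+1}" by (auto simp: A_def)
  have "card A + card (Suc ` A) = card (A \<union> Suc ` A)"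
    using disj by (intro card_Un_disjoint[symmetric]) (auto simp: A_def)
  also have "\<dots> \<le> card {1..?R+1}" using sub by (intro card_mono) auto
  finally have "card A + card (Suc ` A) \<le> ?R + 1" by simp
  moreover have "card (Suc ` A) = card A" by (simp add: card_image)
  ultimately show ?thesis using c1 by simp
qed

end

fun Wp :: "('a \<Rightarrow> int) \<Rightarrow> (nat \<Rightarrow> 'a) \<Rightarrow> nat \<Rightarrow> 'a \<Rightarrow> int" where
  "Wp w0 p 0 = w0"
| "Wp w0 p (Suc t) = (Wp w0 p t)(p (Suc t) := int (Suc t))"

lemma Wp_ge: "1 \<le> s \<Longrightarrow> s \<le> t \<Longrightarrow> p s = y \<Longrightarrow> Wp w0 p t y \<ge> int s"
proof (induction t)
  case 0 then show ?case by simp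
next
  case (Suc t)
  show ?case
  proof (cases "s = Suc t")
    case True then show ?thesis using Suc.prems by simp
  next
    case False
    then have "Wp w0 p t y \<ge> int s" using Suc by simp
    then show ?thesis using Suc.prems False by auto
  qed
qed

lemma Wp_keep: "t0 \<le> t \<Longrightarrow> (\<forall>s. t0 < s \<and> s \<le> t \<longrightarrow> p s \<noteq> y) \<Longrightarrow> Wp w0 p t y = Wp w0 p t0 y"
proof (induction t)
  case 0 then show ?case by simp
next
  case (Suc t)
  show ?case
  proof (cases "t0 = Suc t")
    case True then show ?thesis by simp
  next
    case False
    then have "t0 \<le> t" using Suc.prems by simp
    then have "Wp w0 p t y = Wp w0 p t0 y" using Suc by simp
    moreover have "p (Suc t) \<noteq> y" using Suc.prems \<open>t0 \<le> t\<close> by simp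
    ultimately show ?thesis by simp
  qed
qed

lemma Wp_unvisited: "(\<forall>s. 1 \<le> s \<and> s \<le> t \<longrightarrow> p s \<noteq> y) \<Longrightarrow> Wp w0 p t y = w0 y"
  using Wp_keep[of 0 t p y w0] by simp

lemma Wp_lb: "Wp w0 p t y = w0 y \<or> Wp w0 p t y \<ge> 1"
  by (induction t) auto

lemma sim:
  assumes w0: "w0 \<in> weightings V" and p1: "p 1 \<in> V" "w0 (p 1) = - int (card V)"
    and steps: "\<And>t. 1 \<le> t \<Longrightarrow> t < T \<Longrightarrow> p (Suc t) \<in> V \<and> E (p t) (p (Suc t)) \<and>
        (\<forall>u\<in>V. E (p t) u \<and> u \<noteq> p (Suc t) \<longrightarrow> Wp w0 p t (p (Suc t)) < Wp w0 p t u)"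
  shows "1 \<le> t \<Longrightarrow> t \<le> T \<Longrightarrow> crawl V E w0 t = (p t, Wp w0 p t)"
proof (induction t)
  case 0 then show ?case by simp
next
  case (Suc t)
  have f: "fst (crawl V E w0 (Suc t)) = p (Suc t)"
  proof (cases "t = 0")
    case True
    have inj: "inj_on w0 V" using w0 by (simp add: weightings_def bij_betw_def)
    have "(THE u. u \<in> V \<and> w0 u = - int (card V)) = p 1"
    proof (rule the_equality)
      show "p 1 \<in> V \<and> w0 (p 1) = - int (card V)" using p1 by simp
    next
      fix u assume "u \<in> V \<and> w0 u = - int (card V)"
      then show "u = p 1" using p1 by (intro inj_onD[OF inj]) auto
    qed
    then show ?thesis using crawl_Suc_fst[of V E w0 0] True by (simp add: One_nat_def)
  next
    case False
    then have c: "crawl V E w0 t = (p t, Wp w0 p t)" using Suc by simp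
    have st: "p (Suc t) \<in> V \<and> E (p t) (p (Suc t)) \<and>
        (\<forall>u\<in>V. E (p t) u \<and> u \<noteq> p (Suc t) \<longrightarrow> Wp w0 p t (p (Suc t)) < Wp w0 p t u)"
      using steps[of t] False Suc.prems by simp
    have "(THE u. u \<in> V \<and> E (p t) u \<and> (\<forall>u'. u' \<in> V \<and> E (p t) u' \<longrightarrow> Wp w0 p t u \<le> Wp w0 p t u')) = p (Suc t)"
    proof (rule the_equality)
      show "p (Suc t) \<in> V \<and> E (p t) (p (Suc t)) \<and> (\<forall>u'. u' \<in> V \<and> E (p t) u' \<longrightarrow> Wp w0 p t (p (Suc t)) \<le> Wp w0 p t u')"
        using st by (metis order_le_less)
    next
      fix u assume u: "u \<in> V \<and> E (p t) u \<and> (\<forall>u'. u' \<in> V \<and> E (p t) u' \<longrightarrow> Wp w0 p t u \<le> Wp w0 p t u')"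
      show "u = p (Suc t)"
      proof (rule ccontr)
        assume "u \<noteq> p (Suc t)"
        then have "Wp w0 p t (p (Suc t)) < Wp w0 p t u" using st u by simp
        moreover have "Wp w0 p t u \<le> Wp w0 p t (p (Suc t))" using u st by simp
        ultimately show False by simp
      qed
    qed
    then show ?thesis using crawl_Suc_fst[of V E w0 t] False c by simp
  qed
  have sn: "snd (crawl V E w0 (Suc t)) = Wp w0 p (Suc t)"
  proof (cases "t = 0")
    case True then show ?thesis using crawl_Suc_snd[of V E w0 t] f by (simp add: fun_upd_def)
  next
    case False
    then have c: "crawl V E w0 t = (p t, Wp w0 p t)" using Suc by simp
    then show ?thesis using crawl_Suc_snd[of V E w0 t] f by (simp add: fun_upd_def)
  qed
  show ?case by (rule prod_eqI) (simp only: f sn fst_conv snd_conv)+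
qed

lemma enum_weighting:
  assumes bij: "bij_betw \<tau> {..<n} V"
  defines "w0 \<equiv> (\<lambda>x. if x \<in> V then int (inv_into {..<n} \<tau> x) - int n else 0)"
  shows "w0 \<in> weightings V" and "\<And>i. i < n \<Longrightarrow> w0 (\<tau> i) = int i - int n"
proof -
  have cardV: "card V = n" using bij_betw_same_card[OF bij] by simp
  have inj: "inj_on \<tau> {..<n}" and img: "\<tau> ` {..<n} = V" using bij by (auto simp: bij_betw_def)
  show val: "\<And>i. i < n \<Longrightarrow> w0 (\<tau> i) = int i - int n"
  proof -
    fix i assume i: "i < n"
    then have "\<tau> i \<in> V" using img by auto
    moreover have "inv_into {..<n} \<tau> (\<tau> i) = i" using inv_into_f_f[OF inj] i by simp
    ultimately show "w0 (\<tau> i) = int i - int n" by (simp add: w0_def)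
  qed
  have "bij_betw w0 V {- int (card V) .. -1}"
    unfolding bij_betw_def
  proof
    show "inj_on w0 V"
    proof (rule inj_onI)
      fix x y assume xy: "x \<in> V" "y \<in> V" "w0 x = w0 y"
      then have "inv_into {..<n} \<tau> x = inv_into {..<n} \<tau> y" by (simp add: w0_def)
      then show "x = y" using xy img by (metis f_inv_into_f)
    qed
    show "w0 ` V = {- int (card V) .. -1}"
    proof
      show "w0 ` V \<subseteq> {- int (card V) .. -1}"
      proof
        fix z assume "z \<in> w0 ` V"
        then obtain x where x: "x \<in> V" "z = w0 x" by blast
        then have "inv_into {..<n} \<tau> x \<in> {..<n}" using img by (metis inv_into_into)
        then show "z \<in> {- int (card V) .. -1}" using x cardV by (simp add: w0_def)
      qed
    next
      show "{- int (card V) .. -1} \<subseteq> w0 ` V"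
      proof
        fix z assume z: "z \<in> {- int (card V) .. -1}"
        define i where "i = nat (z + int n)"
        have "0 \<le> z + int n" "z + int n < int n" using z cardV by auto
        then have i: "i < n" by (simp add: i_def nat_less_iff)
        have "w0 (\<tau> i) = z" using val[OF i] z cardV by (simp add: i_def)
        moreover have "\<tau> i \<in> V" using img i by auto
        ultimately show "z \<in> w0 ` V" by (metis image_eqI)
      qed
    qed
  qed
  then show "w0 \<in> weightings V" by (simp add: weightings_def w0_def)
qed



lemma modlem1:
  fixes m i l :: nat
  assumes "m \<ge> 1" "i \<ge> m" "l < m" "l \<noteq> i mod m"
  shows "i - m < i - (i - l) mod m \<and> i - (i - l) mod m < i \<and> (i - (i - l) mod m) mod m = l"
proof -
  let ?d = "(i - l) mod m"
  have dm: "?d < m" using assms by simp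
  have il: "l \<le> i" using assms by simp
  have d0: "?d \<noteq> 0"
  proof
    assume "?d = 0"
    then have "m dvd (i - l)" by (simp add: dvd_eq_mod_eq_0)
    then have "i mod m = l mod m" using il by (simp add: mod_eq_dvd_iff_nat)
    then show False using assms by simp
  qed
  have dec: "i - l = ((i - l) div m) * m + ?d" by simp
  have "i - ?d = l + ((i - l) div m) * m" using dec il dm by linarith
  then have "(i - ?d) mod m = l" using assms by simp
  moreover have "?d \<le> i" using dec il by linarith
  moreover have "i - m < i - ?d" using dm \<open>?d \<le> i\<close> assms(2) by linarith
  ultimately show ?thesis using dm d0 assms by auto
qed

lemma modlem2:
  fixes m i j :: nat
  assumes "m \<ge> 1" "i - m < j" "j < i"
  shows "j mod m \<noteq> i mod m"
proof
  assume "j mod m = i mod m"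
  then have "i mod m = j mod m" by simp
  then have "m dvd (i - j)" using assms mod_eq_dvd_iff_nat[of j i m] by simp
  moreover have "0 < i - j" "i - j < m" using assms by auto
  ultimately show False by (simp add: nat_dvd_not_less)
qed

lemma modlem3: "(m::nat) \<le> i \<Longrightarrow> (i - m) mod m = i mod m"
  by (simp add: mod_if le_mod_geq)
lemma half_even: "even (x::nat) \<Longrightarrow> x \<ge> 1 \<Longrightarrow> (x - 1) div 2 = x div 2 - 1" by presburger
lemma half_odd: "odd (x::nat) \<Longrightarrow> (x - 1) div 2 = x div 2" by presburger

lemma pi_odd: "odd (t::nat) \<Longrightarrow> Suc t div 2 = Suc (t div 2)" by presburger
lemma pi_even: "even (t::nat) \<Longrightarrow> Suc t div 2 = t div 2" by presburger
lemma pi_lt: "t < (n::nat) \<Longrightarrow> (if even t then t div 2 + n div 2 else t div 2) < n"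
proof -
  assume t: "t < n"
  have n: "n = 2 * (n div 2) + n mod 2" "n mod 2 \<le> 1" by auto
  show ?thesis
  proof (cases "even t")
    case True then obtain q where q: "t = 2 * q" by (auto elim!: evenE)
    then show ?thesis using t n by simp
  next
    case False then obtain q where q: "t = 2 * q + 1" by (auto elim!: oddE)
    then show ?thesis using t n by simp
  qed
qed
lemma pi_inj: "a < (n::nat) \<Longrightarrow> b < n \<Longrightarrow> (if even a then a div 2 + n div 2 else a div 2) = (if even b then b div 2 + n div 2 else b div 2) \<Longrightarrow> a = b"
proof -
  assume a: "a < n" and b: "b < n" and eq: "(if even a then a div 2 + n div 2 else a div 2) = (if even b then b div 2 + n div 2 else b div 2)"
  have n: "n = 2 * (n div 2) + n mod 2" "n mod 2 \<le> 1" by auto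
  have ea: "a = 2 * (a div 2) + a mod 2" "b = 2 * (b div 2) + b mod 2" by auto
  show ?thesis
  proof (cases "even a"; cases "even b")
    assume c: "even a" "even b"
    have m: "a mod 2 = 0" "b mod 2 = 0" using c by presburger+
    have "a div 2 + n div 2 = b div 2 + n div 2" using eq c by simp
    then show ?thesis using ea m by linarith
  next
    assume c: "odd a" "odd b"
    have m: "a mod 2 = 1" "b mod 2 = 1" using c by presburger+
    have "a div 2 = b div 2" using eq c by simp
    then show ?thesis using ea m by linarith
  next
    assume c: "even a" "odd b"
    have m: "a mod 2 = 0" "b mod 2 = 1" using c by presburger+
    have "a div 2 + n div 2 = b div 2" using eq c by simp
    then show ?thesis using ea m b n by linarith
  next
    assume c: "odd a" "even b"
    have m: "a mod 2 = 1" "b mod 2 = 0" using c by presburger+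
    have "a div 2 = b div 2 + n div 2" using eq c by simp
    then show ?thesis using ea m a n by linarith
  qed
qed

context
  fixes k :: nat and s :: "nat \<Rightarrow> nat"
  assumes k3: "k \<ge> 3" and spos: "\<And>i. 1 \<le> i \<Longrightarrow> i \<le> k \<Longrightarrow> s i \<ge> 1"
    and sle: "\<And>i. 1 \<le> i \<Longrightarrow> i \<le> k \<Longrightarrow> s i \<le> s 1"
begin

abbreviation "VV \<equiv> kpart_V k s"

lemma VV_Sigma: "VV = Sigma {1..k} (\<lambda>i. {..<s i})"
  by (auto simp: kpart_V_def)

lemma VV_fin: "finite VV" unfolding VV_Sigma by simp

lemma part_eq: "1 \<le> i \<Longrightarrow> i \<le> k \<Longrightarrow> {y\<in>VV. fst y = i} = {i} \<times> {..<s i}"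
  by (auto simp: kpart_V_def)

lemma part_card: "1 \<le> i \<Longrightarrow> i \<le> k \<Longrightarrow> card {y\<in>VV. fst y = i} = s i"
  using part_eq by (simp add: card_cartesian_product)

lemma VV_card: "card VV = (\<Sum>i=1..k. s i)"
  unfolding VV_Sigma by (simp add: card_SigmaI)

lemma VV_fst: "y \<in> VV \<Longrightarrow> 1 \<le> fst y \<and> fst y \<le> k"
  by (auto simp: kpart_V_def)

lemma VV_nb: "\<forall>v\<in>VV. \<exists>u\<in>VV. kpart_E v u"
proof
  fix v assume v: "v \<in> VV"
  have a: "(1, 0) \<in> VV" using spos[of 1] k3 by (simp add: kpart_V_def)
  have b: "(2, 0) \<in> VV" using spos[of 2] k3 by (simp add: kpart_V_def)
  show "\<exists>u\<in>VV. kpart_E v u"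
  proof (cases "fst v = 1")
    case True then show ?thesis using b by (intro bexI[of _ "(2,0)"]) (auto simp: kpart_E_def)
  next
    case False then show ?thesis using a by (intro bexI[of _ "(1,0)"]) (auto simp: kpart_E_def)
  qed
qed

lemma VV_ne: "VV \<noteq> {}"
proof -
  have "(1, 0) \<in> VV" using spos[of 1] k3 by (simp add: kpart_V_def)
  then show ?thesis by auto
qed

lemma Epart: "\<And>u v. kpart_E u v = (fst u \<noteq> fst v)" by (simp add: kpart_E_def)

lemma lower:
  assumes w0: "w0 \<in> weightings VV"
  shows "card VV \<le> RC_time VV kpart_E w0 \<and> 2 * s 1 \<le> RC_time VV kpart_E w0 + 1"
proof -
  have "card VV \<le> RC_time VV kpart_E w0"
    using RC_ge_card[OF VV_fin VV_ne w0 VV_nb Epart] .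
  moreover have "2 * card {y\<in>VV. fst y = 1} \<le> RC_time VV kpart_E w0 + 1"
    using RC_ge_part[OF VV_fin VV_ne w0 VV_nb Epart] .
  ultimately show ?thesis using part_card[of 1] k3 by simp
qed

definition "LL = sorted_list_of_set VV"

lemma LL_props: "distinct LL" "set LL = VV" "length LL = card VV" "sorted LL"
  using VV_fin by (auto simp: LL_def)

lemma LL_bij: "bij_betw ((!) LL) {..<card VV} VV"
  using LL_props by (intro bij_betw_nth) auto

lemma LL_in: "c < card VV \<Longrightarrow> LL ! c \<in> VV"
  using LL_props by (metis nth_mem)

lemma LL_inj: "a < card VV \<Longrightarrow> b < card VV \<Longrightarrow> LL ! a = LL ! b \<longleftrightarrow> a = b"
  using LL_props by (simp add: nth_eq_iff_index_eq)

lemma LL_fst_mono: "a \<le> b \<Longrightarrow> b < card VV \<Longrightarrow> fst (LL ! a) \<le> fst (LL ! b)"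
proof -
  assume "a \<le> b" "b < card VV"
  then have "LL ! a \<le> LL ! b" using LL_props by (intro sorted_nth_mono) auto
  then show ?thesis by (auto simp: less_eq_prod_def)
qed

lemma LL_surj: "y \<in> VV \<Longrightarrow> \<exists>c<card VV. y = LL ! c"
  using LL_props by (metis in_set_conv_nth)

lemma run_bound:
  assumes ab: "a \<le> b" "b < card VV" and eq: "fst (LL ! a) = fst (LL ! b)"
  shows "b - a + 1 \<le> s 1"
proof -
  let ?f = "fst (LL ! a)"
  have f: "1 \<le> ?f" "?f \<le> k" using VV_fst[OF LL_in[of a]] ab by auto
  have "(!) LL ` {a..b} \<subseteq> {y\<in>VV. fst y = ?f}"
  proof
    fix y assume "y \<in> (!) LL ` {a..b}"
    then obtain c where c: "c \<in> {a..b}" "y = LL ! c" by blast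
    have "fst (LL ! a) \<le> fst (LL ! c)" using c ab by (intro LL_fst_mono) auto
    moreover have "fst (LL ! c) \<le> fst (LL ! b)" using c ab by (intro LL_fst_mono) auto
    ultimately show "y \<in> {y\<in>VV. fst y = ?f}" using c eq LL_in[of c] ab by auto
  qed
  then have "card ((!) LL ` {a..b}) \<le> card {y\<in>VV. fst y = ?f}"
    using VV_fin by (intro card_mono) auto
  moreover have "card ((!) LL ` {a..b}) = b - a + 1"
  proof -
    have "inj_on ((!) LL) {a..b}" using LL_inj ab by (auto simp: inj_on_def)
    then show ?thesis using ab by (simp add: card_image Suc_diff_le)
  qed
  ultimately show ?thesis using part_card[OF f] sle[OF f] by simp
qed

lemma part1_iff:
  assumes c: "c < card VV"
  shows "fst (LL ! c) = 1 \<longleftrightarrow> c < s 1"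
proof
  assume h: "fst (LL ! c) = 1"
  have "fst (LL ! 0) = 1" using LL_fst_mono[of 0 c] c h VV_fst[OF LL_in[of 0]] by simp
  then have "c - 0 + 1 \<le> s 1" using run_bound[of 0 c] c h by simp
  then show "c < s 1" by simp
next
  assume h: "c < s 1"
  show "fst (LL ! c) = 1"
  proof (rule ccontr)
    assume ne: "fst (LL ! c) \<noteq> 1"
    then have gt: "fst (LL ! c) > 1" using VV_fst[OF LL_in[OF c]] by simp
    have "{y\<in>VV. fst y = 1} \<subseteq> (!) LL ` {..<c}"
    proof
      fix y assume y: "y \<in> {y\<in>VV. fst y = 1}"
      then obtain c' where c': "c' < card VV" "y = LL ! c'" using LL_surj[of y] y by auto
      have "c' < c"
      proof (rule ccontr)
        assume "\<not> c' < c"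
        then have "fst (LL ! c) \<le> fst (LL ! c')" using c' by (intro LL_fst_mono) auto
        then show False using gt y c' by simp
      qed
      then show "y \<in> (!) LL ` {..<c}" using c' by (intro image_eqI[of y _ c']) auto
    qed
    then have "card {y\<in>VV. fst y = 1} \<le> card ((!) LL ` {..<c})" by (intro card_mono) auto
    also have "\<dots> \<le> c" using card_image_le[of "{..<c}" "(!) LL"] by simp
    finally show False using part_card[of 1] k3 h by simp
  qed
qed

lemma hamilton_upper:
  assumes tb: "bij_betw \<tau> {..<card VV} VV"
    and cons: "\<And>t. Suc t < card VV \<Longrightarrow> fst (\<tau> t) \<noteq> fst (\<tau> (Suc t))"
  shows "\<exists>w0\<in>weightings VV. RC_time VV kpart_E w0 = card VV"
proof -
  let ?n = "card VV"
  define w0 where "w0 = (\<lambda>x. if x \<in> VV then int (inv_into {..<?n} \<tau> x) - int ?n else 0)"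
  have w0W: "w0 \<in> weightings VV" and w0v: "\<And>i. i < ?n \<Longrightarrow> w0 (\<tau> i) = int i - int ?n"
    using enum_weighting[OF tb] unfolding w0_def by auto
  have inj: "inj_on \<tau> {..<?n}" and img: "\<tau> ` {..<?n} = VV" using tb by (auto simp: bij_betw_def)
  have n0: "?n \<ge> 1" using VV_fin VV_ne by (simp add: Suc_le_eq card_gt_0_iff)
  define p where "p = (\<lambda>t. \<tau> (t - 1))"
  have tin: "\<And>j. j < ?n \<Longrightarrow> \<tau> j \<in> VV" using img by auto
  have tinj: "\<And>i j. i < ?n \<Longrightarrow> j < ?n \<Longrightarrow> \<tau> i = \<tau> j \<longleftrightarrow> i = j" using inj by (auto dest: inj_onD)
  have unv: "\<And>t j. j < ?n \<Longrightarrow> t \<le> j \<Longrightarrow> Wp w0 p t (\<tau> j) = int j - int ?n"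
  proof -
    fix t j :: nat assume j: "j < ?n" "t \<le> j"
    have "\<forall>s. 1 \<le> s \<and> s \<le> t \<longrightarrow> p s \<noteq> \<tau> j"
      using j tinj by (auto simp: p_def)
    then show "Wp w0 p t (\<tau> j) = int j - int ?n" using Wp_unvisited w0v j by metis
  qed
  have vis: "\<And>t j. j < t \<Longrightarrow> Wp w0 p t (\<tau> j) \<ge> 1"
  proof -
    fix t j :: nat assume j: "j < t"
    have "Wp w0 p t (\<tau> j) \<ge> int (Suc j)" using j by (intro Wp_ge) (auto simp: p_def)
    then show "Wp w0 p t (\<tau> j) \<ge> 1" by simp
  qed
  have sim1: "\<And>t. 1 \<le> t \<Longrightarrow> t \<le> ?n \<Longrightarrow> crawl VV kpart_E w0 t = (p t, Wp w0 p t)"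
  proof (rule sim[OF w0W])
    show "p 1 \<in> VV" using tin n0 by (simp add: p_def)
    show "w0 (p 1) = - int ?n" using w0v n0 by (simp add: p_def)
  next
    fix t assume t: "1 \<le> t" "t < ?n"
    have a: "p (Suc t) \<in> VV" using tin t by (simp add: p_def)
    have b: "kpart_E (p t) (p (Suc t))" using cons[of "t - 1"] t by (simp add: p_def kpart_E_def)
    have c: "\<forall>u\<in>VV. kpart_E (p t) u \<and> u \<noteq> p (Suc t) \<longrightarrow> Wp w0 p t (p (Suc t)) < Wp w0 p t u"
    proof (intro ballI impI)
      fix u assume u: "u \<in> VV" "kpart_E (p t) u \<and> u \<noteq> p (Suc t)"
      obtain j where j: "j < ?n" "u = \<tau> j" using u img by auto
      have jt: "j \<noteq> t" using u j by (auto simp: p_def)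
      have tgt: "Wp w0 p t (p (Suc t)) = int t - int ?n" using unv[of t t] t by (simp add: p_def)
      show "Wp w0 p t (p (Suc t)) < Wp w0 p t u"
      proof (cases "j < t")
        case True then show ?thesis using vis[of j t] tgt t j by simp
      next
        case False then show ?thesis using unv[of j t] tgt t j jt by simp
      qed
    qed
    show "p (Suc t) \<in> VV \<and> kpart_E (p t) (p (Suc t)) \<and>
        (\<forall>u\<in>VV. kpart_E (p t) u \<and> u \<noteq> p (Suc t) \<longrightarrow> Wp w0 p t (p (Suc t)) < Wp w0 p t u)"
      using a b c by simp
  qed
  have "snd (crawl VV kpart_E w0 ?n) = Wp w0 p ?n" using sim1[of ?n] n0 by simp
  moreover have "\<forall>y\<in>VV. Wp w0 p ?n y > 0"
  proof
    fix y assume "y \<in> VV"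
    then obtain j where j: "j < ?n" "y = \<tau> j" using img by auto
    then show "Wp w0 p ?n y > 0" using vis[of j ?n] by simp
  qed
  ultimately have "RC_time VV kpart_E w0 \<le> ?n" using n0 by (intro RC_le[OF VV_fin VV_ne w0W VV_nb]) auto
  moreover have "?n \<le> RC_time VV kpart_E w0" using lower[OF w0W] by simp
  ultimately show ?thesis using w0W by (intro bexI[of _ w0]) auto
qed

lemma caseA:
  assumes small: "2 * s 1 \<le> card VV"
  shows "\<exists>w0\<in>weightings VV. RC_time VV kpart_E w0 = card VV"
proof -
  let ?n = "card VV"
  let ?h = "?n div 2"
  define \<pi> where "\<pi> = (\<lambda>t::nat. if even t then t div 2 + ?h else t div 2)"
  have pin: "\<And>t. t < ?n \<Longrightarrow> \<pi> t < ?n" unfolding \<pi>_def by (rule pi_lt)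
  have piinj: "inj_on \<pi> {..<?n}"
  proof (rule inj_onI)
    fix a b assume ab: "a \<in> {..<?n}" "b \<in> {..<?n}" "\<pi> a = \<pi> b"
    then show "a = b" using pi_inj[of a ?n b] unfolding \<pi>_def by simp
  qed
  have "\<pi> ` {..<?n} = {..<?n}" using pin piinj by (intro endo_inj_surj) auto
  then have pib: "bij_betw \<pi> {..<?n} {..<?n}" using piinj by (simp add: bij_betw_def)
  have tb: "bij_betw ((!) LL \<circ> \<pi>) {..<?n} VV" using bij_betw_trans[OF pib LL_bij] .
  have s1h: "s 1 \<le> ?h" using small by simp
  show ?thesis
  proof (rule hamilton_upper[OF tb])
    fix t assume t: "Suc t < ?n"
    show "fst (((!) LL \<circ> \<pi>) t) \<noteq> fst (((!) LL \<circ> \<pi>) (Suc t))"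
    proof (cases "even t")
      case True
      have e1: "\<pi> t = t div 2 + ?h" "\<pi> (Suc t) = t div 2" using True pi_even[of t] by (auto simp: \<pi>_def)
      have "t div 2 + ?h < ?n" using pin[of t] t e1 by simp
      then have "fst (LL ! (t div 2)) \<noteq> fst (LL ! (t div 2 + ?h))"
        using run_bound[of "t div 2" "t div 2 + ?h"] s1h by fastforce
      then show ?thesis using e1 by simp
    next
      case False
      have e1: "\<pi> t = t div 2" "\<pi> (Suc t) = Suc (t div 2) + ?h" using False pi_odd[of t] by (auto simp: \<pi>_def)
      have "Suc (t div 2) + ?h < ?n" using pin[of "Suc t"] t e1 by simp
      then have "fst (LL ! (t div 2)) \<noteq> fst (LL ! (Suc (t div 2) + ?h))"
        using run_bound[of "t div 2" "Suc (t div 2) + ?h"] s1h by fastforce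
      then show ?thesis using e1 by simp
    qed
  qed
qed

lemma caseB:
  assumes big: "card VV < 2 * s 1"
  shows "\<exists>w0\<in>weightings VV. RC_time VV kpart_E w0 = 2 * s 1 - 1"
proof -
  let ?n = "card VV"
  let ?s = "s 1"
  have s1: "?s \<ge> 1" using spos[of 1] k3 by simp
  have s1n: "?s < ?n"
  proof -
    have sub: "{y\<in>VV. fst y = 1} \<subset> VV"
    proof -
      have "(2, 0) \<in> VV" using spos[of 2] k3 by (simp add: kpart_V_def)
      then show ?thesis by force
    qed
    have "card {y\<in>VV. fst y = 1} < ?n" by (rule psubset_card_mono[OF VV_fin sub])
    then show ?thesis using part_card[of 1] k3 by simp
  qed
  define m where "m = ?n - ?s"
  have m1: "m \<ge> 1" and mlt: "m < ?s" and nm: "?n = ?s + m" using s1n big by (auto simp: m_def)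
  define T where "T = 2 * ?s - 1"
  define idx where "idx = (\<lambda>t::nat. if odd t then t div 2 else ?s + (t div 2 - 1) mod m)"
  define p where "p = (\<lambda>t. LL ! idx t)"
  define w0 where "w0 = (\<lambda>x. if x \<in> VV then int (inv_into {..<?n} ((!) LL) x) - int ?n else 0)"
  have w0W: "w0 \<in> weightings VV" and w0v: "\<And>c. c < ?n \<Longrightarrow> w0 (LL ! c) = int c - int ?n"
    using enum_weighting[OF LL_bij] unfolding w0_def by auto
  have idx_o: "\<And>q. idx (2 * q + 1) = q" by (simp add: idx_def)
  have idx_e: "\<And>q. idx (2 * q + 2) = ?s + q mod m" by (simp add: idx_def)
  have idx_lt: "\<And>t. t \<le> T \<Longrightarrow> idx t < ?n"
  proof -
    fix t assume t: "t \<le> T"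
    show "idx t < ?n"
    proof (cases "odd t")
      case True
      then have "t = 2 * (t div 2) + 1" by simp
      then have "t div 2 < ?s" using t s1 by (simp add: T_def)
      then show ?thesis using True s1n by (simp add: idx_def)
    next
      case False
      have "(t div 2 - 1) mod m < m" using m1 by simp
      then show ?thesis using False nm by (simp add: idx_def)
    qed
  qed
  have pv: "\<And>t c. t \<le> T \<Longrightarrow> c < ?n \<Longrightarrow> p t = LL ! c \<longleftrightarrow> idx t = c"
    unfolding p_def using idx_lt LL_inj by blast
  have unv: "\<And>t c. t \<le> T \<Longrightarrow> c < ?n \<Longrightarrow> (\<forall>s'. 1 \<le> s' \<and> s' \<le> t \<longrightarrow> idx s' \<noteq> c)
      \<Longrightarrow> Wp w0 p t (LL ! c) = int c - int ?n"
  proof -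
    fix t c assume t: "t \<le> T" and c: "c < ?n" and nv: "\<forall>s'. 1 \<le> s' \<and> s' \<le> t \<longrightarrow> idx s' \<noteq> c"
    have "\<forall>s'. 1 \<le> s' \<and> s' \<le> t \<longrightarrow> p s' \<noteq> LL ! c"
    proof (intro allI impI)
      fix s' assume "1 \<le> s' \<and> s' \<le> t"
      then show "p s' \<noteq> LL ! c" using pv[of s' c] nv t c by simp
    qed
    then have "Wp w0 p t (LL ! c) = w0 (LL ! c)" by (rule Wp_unvisited)
    then show "Wp w0 p t (LL ! c) = int c - int ?n" using w0v c by simp
  qed
  have vis: "\<And>t s' c. 1 \<le> s' \<Longrightarrow> s' \<le> t \<Longrightarrow> idx s' = c \<Longrightarrow> Wp w0 p t (LL ! c) \<ge> int s'"
    by (rule Wp_ge) (auto simp: p_def)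
  have lbw: "\<And>t c. c < ?n \<Longrightarrow> Wp w0 p t (LL ! c) = int c - int ?n \<or> Wp w0 p t (LL ! c) \<ge> 1"
    using Wp_lb w0v by metis
  have sim1: "\<And>t. 1 \<le> t \<Longrightarrow> t \<le> T \<Longrightarrow> crawl VV kpart_E w0 t = (p t, Wp w0 p t)"
  proof (rule sim[OF w0W])
    have "p 1 = LL ! 0" using idx_o[of 0] by (simp add: p_def)
    then show "p 1 \<in> VV" "w0 (p 1) = - int ?n" using LL_in[of 0] w0v[of 0] s1n by auto
  next
    fix t assume t: "1 \<le> t" "t < T"
    show "p (Suc t) \<in> VV \<and> kpart_E (p t) (p (Suc t)) \<and>
        (\<forall>u\<in>VV. kpart_E (p t) u \<and> u \<noteq> p (Suc t) \<longrightarrow> Wp w0 p t (p (Suc t)) < Wp w0 p t u)"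
    proof (cases "odd t")
      case True
      define i where "i = t div 2"
      have ti: "t = 2 * i + 1" using True by (simp add: i_def)
      have isl: "i + 1 < ?s" using t ti by (simp add: T_def)
      define j where "j = i mod m"
      have jm: "j < m" using m1 by (simp add: j_def)
      have pt: "p t = LL ! i" using idx_o[of i] ti by (simp add: p_def)
      have ps: "p (Suc t) = LL ! (?s + j)" using idx_e[of i] ti by (simp add: p_def j_def)
      have tgn: "?s + j < ?n" using jm nm by simp
      have f1: "fst (LL ! i) = 1" using part1_iff[of i] isl s1n by simp
      have f2: "fst (LL ! (?s + j)) \<noteq> 1" using part1_iff[of "?s + j"] tgn by simp
      have A: "p (Suc t) \<in> VV" using ps LL_in tgn by simp
      have B: "kpart_E (p t) (p (Suc t))" using pt ps f1 f2 by (simp add: kpart_E_def)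
      have C: "\<forall>u\<in>VV. kpart_E (p t) u \<and> u \<noteq> p (Suc t) \<longrightarrow> Wp w0 p t (p (Suc t)) < Wp w0 p t u"
      proof (intro ballI impI)
        fix u assume u: "u \<in> VV" "kpart_E (p t) u \<and> u \<noteq> p (Suc t)"
        obtain c where c: "c < ?n" "u = LL ! c" using LL_surj[OF u(1)] by auto
        have "fst (LL ! c) \<noteq> 1" using u c pt f1 by (simp add: kpart_E_def)
        then have cs: "c \<ge> ?s" using part1_iff[OF c(1)] by simp
        define l where "l = c - ?s"
        have cl: "c = ?s + l" and lm: "l < m" using cs c nm by (auto simp: l_def)
        have lj: "l \<noteq> j" using u c cl ps by auto
        show "Wp w0 p t (p (Suc t)) < Wp w0 p t u"
        proof (cases "i < m")
          case True
          have ji: "j = i" using True by (simp add: j_def)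
          have nv: "\<forall>s'. 1 \<le> s' \<and> s' \<le> t \<longrightarrow> idx s' \<noteq> ?s + j"
          proof (intro allI impI)
            fix s' assume s': "1 \<le> s' \<and> s' \<le> t"
            show "idx s' \<noteq> ?s + j"
            proof (cases "odd s'")
              case True
              have "s' div 2 \<le> (2 * i + 1) div 2" using s' ti by (intro div_le_mono) simp
              then show ?thesis using True isl by (simp add: idx_def)
            next
              case False
              then have "s' = 2 * (s' div 2)" by simp
              then have "s' div 2 - 1 < i" using s' ti by linarith
              then have "(s' div 2 - 1) mod m = s' div 2 - 1" using True by simp
              then show ?thesis using False ji \<open>s' div 2 - 1 < i\<close> by (simp add: idx_def)
            qed
          qed
          have tg: "Wp w0 p t (p (Suc t)) = int (?s + j) - int ?n"
            using unv[of t "?s + j"] nv tgn t ps by (simp add: T_def)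
          have neg: "?s + j < ?n" using tgn .
          show ?thesis
          proof (cases "l < i")
            case True
            have "idx (2 * l + 2) = c" using idx_e[of l] lm cl by simp
            then have "Wp w0 p t (LL ! c) \<ge> int (2 * l + 2)" using True ti by (intro vis) auto
            then show ?thesis using tg neg c by simp
          next
            case False
            then have "l > j" using lj ji by simp
            then show ?thesis using lbw[of c t] tg neg c cl by auto
          qed
        next
          case False
          define s0 where "s0 = 2 * (i - m) + 2"
          have s0t: "s0 \<le> t" "1 \<le> s0" using False ti m1 by (auto simp: s0_def)
          have idx0: "idx s0 = ?s + j" using idx_e[of "i - m"] modlem3[of m i] False by (simp add: s0_def j_def)
          have ps0: "p s0 = p (Suc t)" using idx0 ps by (simp add: p_def)
          have w_s0: "Wp w0 p s0 (p s0) = int s0" by (simp add: s0_def)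
          have keep: "\<forall>s'. s0 < s' \<and> s' \<le> t \<longrightarrow> p s' \<noteq> p (Suc t)"
          proof (intro allI impI)
            fix s' assume s': "s0 < s' \<and> s' \<le> t"
            have "idx s' \<noteq> ?s + j"
            proof (cases "odd s'")
              case True
              have "s' div 2 \<le> (2 * i + 1) div 2" using s' ti by (intro div_le_mono) simp
              then show ?thesis using True isl by (simp add: idx_def)
            next
              case False
              then have "s' = 2 * (s' div 2)" by simp
              then have r: "i - m < s' div 2 - 1" "s' div 2 - 1 < i" using s' ti False by (auto simp: s0_def)
              have "(s' div 2 - 1) mod m \<noteq> i mod m" using modlem2[OF m1 r] .
              then show ?thesis using False by (simp add: idx_def j_def)
            qed
            then show "p s' \<noteq> p (Suc t)" using pv[of s' "?s + j"] ps s' t tgn by (simp add: T_def)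
          qed
          have tg: "Wp w0 p t (p (Suc t)) = int s0"
            using Wp_keep[of s0 t p "p (Suc t)" w0] keep s0t ps0 w_s0 by simp
          have mi: "m \<le> i" using False by simp
          have lj': "l \<noteq> i mod m" using lj by (simp add: j_def)
          define i' where "i' = i - (i - l) mod m"
          have i': "i - m < i'" "i' < i" "i' mod m = l"
            using modlem1[OF m1 mi lm lj'] unfolding i'_def by auto
          have "idx (2 * i' + 2) = c" using idx_e[of i'] i' cl by simp
          then have "Wp w0 p t (LL ! c) \<ge> int (2 * i' + 2)" using i' ti by (intro vis) auto
          then show ?thesis using tg i' c by (simp add: s0_def)
        qed
      qed
      show ?thesis using A B C by simp
    next
      case False
      define i where "i = t div 2 - 1"
      have ti: "t = 2 * i + 2" using False t by (simp add: i_def) presburger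
      have isl: "i + 2 \<le> ?s" using t ti by (simp add: T_def)
      have jm: "i mod m < m" using m1 by simp
      have pt: "p t = LL ! (?s + i mod m)" using idx_e[of i] ti by (simp add: p_def)
      have ps: "p (Suc t) = LL ! (i + 1)" using idx_o[of "i + 1"] ti by (simp add: p_def)
      have f1: "fst (LL ! (i + 1)) = 1" using part1_iff[of "i + 1"] isl s1n by simp
      have f2: "fst (LL ! (?s + i mod m)) \<noteq> 1" using part1_iff[of "?s + i mod m"] jm nm by simp
      have A: "p (Suc t) \<in> VV" using ps LL_in isl s1n by simp
      have B: "kpart_E (p t) (p (Suc t))" using pt ps f1 f2 by (simp add: kpart_E_def)
      have nv: "\<forall>s'. 1 \<le> s' \<and> s' \<le> t \<longrightarrow> idx s' \<noteq> i + 1"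
      proof (intro allI impI)
        fix s' assume s': "1 \<le> s' \<and> s' \<le> t"
        show "idx s' \<noteq> i + 1"
        proof (cases "odd s'")
          case True
          have "s' \<le> 2 * i + 1" using True s' ti by presburger
          then have "s' div 2 \<le> (2 * i + 1) div 2" by (intro div_le_mono)
          then show ?thesis using True by (simp add: idx_def)
        next
          case False then show ?thesis using isl by (simp add: idx_def)
        qed
      qed
      have tg: "Wp w0 p t (p (Suc t)) = int (i + 1) - int ?n"
        using unv[of t "i + 1"] nv isl s1n t ps by (simp add: T_def)
      have C: "\<forall>u\<in>VV. kpart_E (p t) u \<and> u \<noteq> p (Suc t) \<longrightarrow> Wp w0 p t (p (Suc t)) < Wp w0 p t u"
      proof (intro ballI impI)
        fix u assume u: "u \<in> VV" "kpart_E (p t) u \<and> u \<noteq> p (Suc t)"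
        obtain c where c: "c < ?n" "u = LL ! c" using LL_surj[OF u(1)] by auto
        have ci: "c \<noteq> i + 1" using u c ps by auto
        show "Wp w0 p t (p (Suc t)) < Wp w0 p t u"
        proof (cases "c < i + 1")
          case True
          have "Wp w0 p t (LL ! c) \<ge> int (2 * c + 1)" using True ti idx_o[of c] by (intro vis) auto
          then show ?thesis using tg c isl s1n by simp
        next
          case False
          then show ?thesis using lbw[of c t] tg c ci isl s1n by auto
        qed
      qed
      show ?thesis using A B C by simp
    qed
  qed
  have T1: "T \<ge> 1" using s1 by (simp add: T_def)
  have "snd (crawl VV kpart_E w0 T) = Wp w0 p T" using sim1[of T] T1 by simp
  moreover have "\<forall>y\<in>VV. Wp w0 p T y > 0"
  proof
    fix y assume "y \<in> VV"
    then obtain c where c: "c < ?n" "y = LL ! c" using LL_surj by blast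
    show "Wp w0 p T y > 0"
    proof (cases "c < ?s")
      case True
      have "Wp w0 p T (LL ! c) \<ge> int (2 * c + 1)" using True idx_o[of c] by (intro vis) (auto simp: T_def)
      then show ?thesis using c by simp
    next
      case False
      define l where "l = c - ?s"
      have cl: "c = ?s + l" and lm: "l < m" using False c nm by (auto simp: l_def)
      have "idx (2 * l + 2) = c" using idx_e[of l] lm cl by simp
      then have "Wp w0 p T (LL ! c) \<ge> int (2 * l + 2)" using lm mlt by (intro vis) (auto simp: T_def)
      then show ?thesis using c by simp
    qed
  qed
  ultimately have "RC_time VV kpart_E w0 \<le> T" using T1 by (intro RC_le[OF VV_fin VV_ne w0W VV_nb]) auto
  moreover have "2 * ?s \<le> RC_time VV kpart_E w0 + 1" using lower[OF w0W] by simp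
  ultimately show ?thesis using w0W by (intro bexI[of _ w0]) (auto simp: T_def)
qed

end


lemma weightings_finite: "finite V \<Longrightarrow> finite (weightings V)"
proof -
  assume fin: "finite V"
  have "weightings V \<subseteq> {f. \<forall>x. (x \<in> V \<longrightarrow> f x \<in> {- int (card V) .. -1}) \<and> (x \<notin> V \<longrightarrow> f x = 0)}"
    by (auto simp: weightings_def bij_betw_def)
  moreover have "finite {f. \<forall>x. (x \<in> V \<longrightarrow> f x \<in> {- int (card V) .. -1}) \<and> (x \<notin> V \<longrightarrow> f x = (0::int))}"
    using fin by (intro finite_set_of_finite_funs) auto
  ultimately show ?thesis by (rule finite_subset)
qed

theorem theorem1:
  fixes k n :: nat and c :: "nat \<Rightarrow> real"
  assumes "k \<ge> 3"
    and "\<forall>i. 1 \<le> i \<and> i < k \<longrightarrow> c (Suc i) \<le> c i"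
    and "\<forall>i. 1 \<le> i \<and> i \<le> k \<longrightarrow> c i > 0"
    and "(\<Sum>i=1..k. c i) = 1"
    and "n \<ge> 1"
    and "\<forall>i. 1 \<le> i \<and> i \<le> k \<longrightarrow> c i * real n \<in> \<int>"
  shows "(c 1 \<le> 1/2 \<longrightarrow>
            rc (kpart_V k (\<lambda>i. nat \<lfloor>c i * real n\<rfloor>)) kpart_E = n)
       \<and> (c 1 > 1/2 \<longrightarrow>
            real (rc (kpart_V k (\<lambda>i. nat \<lfloor>c i * real n\<rfloor>)) kpart_E) = 2 * c 1 * real n - 1)"
proof -
  note k3 = assms(1) and mono = assms(2) and cpos = assms(3) and csum = assms(4) and n1 = assms(5) and cint = assms(6)
  define s where "s = (\<lambda>i. nat \<lfloor>c i * real n\<rfloor>)"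
  have sreal: "\<And>i. 1 \<le> i \<Longrightarrow> i \<le> k \<Longrightarrow> real (s i) = c i * real n"
  proof -
    fix i assume i: "1 \<le> i" "i \<le> k"
    obtain z where z: "c i * real n = of_int z" using cint i by (metis Ints_cases)
    have "c i * real n > 0" using cpos i n1 by simp
    then have "z \<ge> 0" using z by simp
    then show "real (s i) = c i * real n" using z by (simp add: s_def)
  qed
  have spos: "\<And>i. 1 \<le> i \<Longrightarrow> i \<le> k \<Longrightarrow> s i \<ge> 1"
  proof -
    fix i assume i: "1 \<le> i" "i \<le> k"
    have "real (s i) > 0" using sreal[OF i] cpos i n1 by simp
    then show "s i \<ge> 1" by simp
  qed
  have cle: "\<And>i. 1 \<le> i \<Longrightarrow> i \<le> k \<Longrightarrow> c i \<le> c 1"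
  proof -
    fix i :: nat assume i: "1 \<le> i" "i \<le> k"
    then show "c i \<le> c 1"
    proof (induction i rule: dec_induct)
      case base then show ?case by simp
    next
      case (step m)
      then have "c (Suc m) \<le> c m" using mono by simp
      then show ?case using step by simp
    qed
  qed
  have sle: "\<And>i. 1 \<le> i \<Longrightarrow> i \<le> k \<Longrightarrow> s i \<le> s 1"
  proof -
    fix i assume i: "1 \<le> i" "i \<le> k"
    have "real (s i) \<le> real (s 1)" using sreal[OF i] sreal[of 1] i cle[OF i] n1 by (simp add: mult_right_mono)
    then show "s i \<le> s 1" by simp
  qed
  have card: "card (kpart_V k s) = n"
  proof -
    have "real (card (kpart_V k s)) = (\<Sum>i=1..k. real (s i))" using VV_card[of k s, OF k3 spos sle] by simp
    also have "\<dots> = (\<Sum>i=1..k. c i * real n)" using sreal by (intro sum.cong) auto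
    also have "\<dots> = real n" using csum by (simp add: sum_distrib_right[symmetric])
    finally show ?thesis by simp
  qed
  let ?V = "kpart_V k s"
  have finW: "finite (RC_time ?V kpart_E ` weightings ?V)"
    using weightings_finite[OF VV_fin[of k s, OF k3 spos sle]] by simp
  have low: "\<And>w0. w0 \<in> weightings ?V \<Longrightarrow> n \<le> RC_time ?V kpart_E w0 \<and> 2 * s 1 \<le> RC_time ?V kpart_E w0 + 1"
    using lower[of k s, OF k3 spos sle] card by simp
  have s1r: "real (s 1) = c 1 * real n" using sreal[of 1] k3 by simp
  have s1: "s 1 \<ge> 1" using spos[of 1] k3 by simp
  have A: "c 1 \<le> 1/2 \<longrightarrow> rc ?V kpart_E = n"
  proof
    assume "c 1 \<le> 1/2"
    then have "real (2 * s 1) \<le> real n" using s1r n1 by (simp add: mult_right_mono[of "c 1" "1/2" "real n", simplified])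
    then have small: "2 * s 1 \<le> card ?V" using card by simp
    obtain w0 where w0: "w0 \<in> weightings ?V" "RC_time ?V kpart_E w0 = n"
      using caseA[of k s, OF k3 spos sle small] card by auto
    show "rc ?V kpart_E = n" unfolding rc_def
      by (rule Min_eqI[OF finW]) (use low w0 in force)+
  qed
  have B: "c 1 > 1/2 \<longrightarrow> real (rc ?V kpart_E) = 2 * c 1 * real n - 1"
  proof
    assume "c 1 > 1/2"
    then have "real n < real (2 * s 1)" using s1r n1 by (simp add: mult_strict_right_mono[of "1/2" "c 1" "real n", simplified])
    then have big: "card ?V < 2 * s 1" using card by simp
    obtain w0 where w0: "w0 \<in> weightings ?V" "RC_time ?V kpart_E w0 = 2 * s 1 - 1"
      using caseB[of k s, OF k3 spos sle big] by auto
    have "rc ?V kpart_E = 2 * s 1 - 1" unfolding rc_def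
    proof (rule Min_eqI[OF finW])
      fix y assume "y \<in> RC_time ?V kpart_E ` weightings ?V"
      then obtain w where "w \<in> weightings ?V" "y = RC_time ?V kpart_E w" by auto
      then show "2 * s 1 - 1 \<le> y" using low by fastforce
    next
      show "2 * s 1 - 1 \<in> RC_time ?V kpart_E ` weightings ?V" using w0 by (metis image_eqI)
    qed
    then show "real (rc ?V kpart_E) = 2 * c 1 * real n - 1" using s1 s1r by (simp add: of_nat_diff)
  qed
  show ?thesis using A B unfolding s_def by simp
qed


end
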